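(* Let $X\subseteq R^n$ be an unbounded definable set. Then $X$ is not definably contractible.
   Context: Throughout, $\mathcal R=\langle R,<,+,0,\{x\mapsto\lambda x\}_{\lambda\in\Lambda}\rangle$ is an ordered vector space over an ordered division ring $\Lambda$; "definable" means definable in $\mathcal R$ with parameters; $R^n$ carries the product of the order topology. A set is bounded if it is contained in a box $(a_1,b_1)\times\dots\times(a_n,b_n)$ with $a_i,b_i\in R$. For definable $A\subseteq X$, $X$ deformation retracts to $A$ if there are $q\in R$, $q\ge0$, and a definable continuous $H:[0,q]\times X\to X$ with $H(0,X)=A$, $H(t,a)=a$ for all $t\in[0,q]$, $a\in A$, and $H(q,x)=x$ for all $x\in X$; $X$ is definably contractible if it deformation retracts to a singleton contained in $X$. *)

theory Defs
  imports "HOL-Analysis.Analysis"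
begin

definition ordered_vector_space :: "('k::{division_ring,linordered_ring_strict} \<Rightarrow> 'v::linordered_ab_group_add \<Rightarrow> 'v) \<Rightarrow> bool" where
  "ordered_vector_space sc \<longleftrightarrow>
     (\<forall>a x y. sc a (x + y) = sc a x + sc a y) \<and>
     (\<forall>a b x. sc (a + b) x = sc a x + sc b x) \<and>
     (\<forall>a b x. sc (a * b) x = sc a (sc b x)) \<and>
     (\<forall>x. sc 1 x = x) \<and>
     (\<forall>a x y. 0 < a \<longrightarrow> x < y \<longrightarrow> sc a x < sc a y)"

text \<open>First-order language of ordered vector spaces: constants 0, +, < and unary
  function symbols x \<mapsto> \<lambda>x for each scalar; parameters from R are allowed (Cst).\<close>

datatype ('k, 'v) tm = Var nat | Cst 'v | Zero | Plus "('k, 'v) tm" "('k, 'v) tm" | Scal 'k "('k, 'v) tm"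

datatype ('k, 'v) fm = Eq "('k, 'v) tm" "('k, 'v) tm" | Less "('k, 'v) tm" "('k, 'v) tm"
  | Neg "('k, 'v) fm" | Conj "('k, 'v) fm" "('k, 'v) fm" | Ex nat "('k, 'v) fm"

primrec eval_tm :: "('k \<Rightarrow> 'v \<Rightarrow> 'v) \<Rightarrow> (nat \<Rightarrow> 'v::linordered_ab_group_add) \<Rightarrow> ('k, 'v) tm \<Rightarrow> 'v" where
  "eval_tm sc e (Var i) = e i"
| "eval_tm sc e (Cst c) = c"
| "eval_tm sc e Zero = 0"
| "eval_tm sc e (Plus s t) = eval_tm sc e s + eval_tm sc e t"
| "eval_tm sc e (Scal a t) = sc a (eval_tm sc e t)"

primrec sat :: "('k \<Rightarrow> 'v \<Rightarrow> 'v) \<Rightarrow> (nat \<Rightarrow> 'v::linordered_ab_group_add) \<Rightarrow> ('k, 'v) fm \<Rightarrow> bool" where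
  "sat sc e (Eq s t) = (eval_tm sc e s = eval_tm sc e t)"
| "sat sc e (Less s t) = (eval_tm sc e s < eval_tm sc e t)"
| "sat sc e (Neg f) = (\<not> sat sc e f)"
| "sat sc e (Conj f g) = (sat sc e f \<and> sat sc e g)"
| "sat sc e (Ex i f) = (\<exists>v. sat sc (e(i := v)) f)"

text \<open>A set of points with coordinates indexed by a finite type 'i is definable (with
  parameters) if it is defined by a formula, coordinates being assigned to distinct
  variables via an injection into nat (remaining variables are set to 0).\<close>

definition definable :: "('k \<Rightarrow> 'v \<Rightarrow> 'v) \<Rightarrow> ('i \<Rightarrow> 'v::linordered_ab_group_add) set \<Rightarrow> bool" where
  "definable sc S \<longleftrightarrow> finite (UNIV :: 'i set) \<and>
     (\<exists>(\<phi> :: ('k, 'v) fm) (\<iota> :: 'i \<Rightarrow> nat). inj \<iota> \<and>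
        S = {x. sat sc (\<lambda>j. if j \<in> range \<iota> then x (inv \<iota> j) else 0) \<phi>})"

definition definable_vset :: "('k \<Rightarrow> 'v \<Rightarrow> 'v) \<Rightarrow> ('v::linordered_ab_group_add ^ 'n) set \<Rightarrow> bool" where
  "definable_vset sc X \<longleftrightarrow> definable sc (vec_nth ` X)"

text \<open>Definability of a map H : [0,q] \<times> X \<rightarrow> R^n: its graph, a subset of R^(1+n+n),
  is definable.\<close>

definition definable_homotopy :: "('k \<Rightarrow> 'v \<Rightarrow> 'v) \<Rightarrow> 'v \<Rightarrow> ('v::linordered_ab_group_add ^ 'n) set
    \<Rightarrow> ('v \<times> ('v ^ 'n) \<Rightarrow> 'v ^ 'n) \<Rightarrow> bool" where
  "definable_homotopy sc q X H \<longleftrightarrow>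
     definable sc {(\<lambda>k :: unit + 'n + 'n. case k of Inl _ \<Rightarrow> t | Inr (Inl i) \<Rightarrow> x $ i
                                     | Inr (Inr i) \<Rightarrow> H (t, x) $ i) | t x. t \<in> {0..q} \<and> x \<in> X}"

definition bounded_box :: "('v::linorder ^ 'n) set \<Rightarrow> bool" where
  "bounded_box X \<longleftrightarrow> (\<exists>a b. \<forall>x\<in>X. \<forall>i. a $ i < x $ i \<and> x $ i < b $ i)"

definition deformation_retracts :: "('k \<Rightarrow> 'v \<Rightarrow> 'v)
    \<Rightarrow> ('v::{linordered_ab_group_add,linorder_topology} ^ 'n) set \<Rightarrow> ('v ^ 'n) set \<Rightarrow> bool" where
  "deformation_retracts sc X A \<longleftrightarrow>
     (\<exists>q H. 0 \<le> q \<and> definable_homotopy sc q X H \<and> continuous_on ({0..q} \<times> X) H \<and>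
        H ` ({0..q} \<times> X) \<subseteq> X \<and>
        (\<lambda>x. H (0, x)) ` X = A \<and>
        (\<forall>t\<in>{0..q}. \<forall>a\<in>A. H (t, a) = a) \<and>
        (\<forall>x\<in>X. H (q, x) = x))"

definition definably_contractible :: "('k \<Rightarrow> 'v \<Rightarrow> 'v)
    \<Rightarrow> ('v::{linordered_ab_group_add,linorder_topology} ^ 'n) set \<Rightarrow> bool" where
  "definably_contractible sc X \<longleftrightarrow> (\<exists>a\<in>X. deformation_retracts sc X {a})"

end

theory Submission
  imports Defs
begin

locale ovs =
  fixes sc :: "'k::{division_ring,linordered_ring_strict} \<Rightarrow> 'v::{linordered_ab_group_add,linorder_topology} \<Rightarrow> 'v"
  assumes ovs: "ordered_vector_space sc"
begin

lemma sc_add_right: "sc a (x + y) = sc a x + sc a y" using ovs unfolding ordered_vector_space_def by blast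
lemma sc_add_left: "sc (a + b) x = sc a x + sc b x" using ovs unfolding ordered_vector_space_def by blast
lemma sc_mult: "sc (a * b) x = sc a (sc b x)" using ovs unfolding ordered_vector_space_def by blast
lemma sc_one: "sc 1 x = x" using ovs unfolding ordered_vector_space_def by blast
lemma sc_strict_mono: "0 < a \<Longrightarrow> x < y \<Longrightarrow> sc a x < sc a y" using ovs unfolding ordered_vector_space_def by blast

lemma sc_zero_right[simp]: "sc a 0 = 0"
  using sc_add_right[of a 0 0] by simp
lemma sc_zero_left[simp]: "sc 0 x = 0"
  using sc_add_left[of 0 0 x] by simp
lemma sc_minus_right: "sc a (- x) = - sc a x"
  using sc_add_right[of a x "-x"] by (simp add: eq_neg_iff_add_eq_0 add.commute)
lemma sc_minus_left: "sc (- a) x = - sc a x"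
  using sc_add_left[of a "-a" x] by (simp add: eq_neg_iff_add_eq_0 add.commute)
lemma sc_diff_right: "sc a (x - y) = sc a x - sc a y"
  using sc_add_right[of a x "-y"] by (simp add: sc_minus_right)
lemma sc_diff_left: "sc (a - b) x = sc a x - sc b x"
  using sc_add_left[of a "-b" x] by (simp add: sc_minus_left)

lemma sc_inv_left: "a \<noteq> 0 \<Longrightarrow> sc (inverse a) (sc a x) = x"
  by (simp add: sc_mult[symmetric] sc_one)
lemma sc_inv_right: "a \<noteq> 0 \<Longrightarrow> sc a (sc (inverse a) x) = x"
  by (simp add: sc_mult[symmetric] sc_one)

lemma sc_less_pos: "0 < a \<Longrightarrow> sc a x < sc a y \<longleftrightarrow> x < y"
  by (metis linorder_neq_iff order_less_asym sc_strict_mono)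
lemma sc_anti: "a < 0 \<Longrightarrow> x < y \<Longrightarrow> sc a y < sc a x"
  using sc_strict_mono[of "-a" x y] by (simp add: sc_minus_left)
lemma sc_less_neg: "a < 0 \<Longrightarrow> sc a x < sc a y \<longleftrightarrow> y < x"
  by (metis linorder_neq_iff order_less_asym sc_anti)
lemma sc_inj: "a \<noteq> 0 \<Longrightarrow> sc a x = sc a y \<longleftrightarrow> x = y"
  by (metis sc_inv_left)

lemma sc_neg_iff: "a \<noteq> 0 \<Longrightarrow> sc a d < 0 \<longleftrightarrow> (0 < a \<and> d < 0) \<or> (a < 0 \<and> 0 < d)"
  by (metis linorder_neq_iff sc_less_neg sc_less_pos sc_zero_right order_less_asym)
lemma sc_zero_iff: "a \<noteq> 0 \<Longrightarrow> sc a d = 0 \<longleftrightarrow> d = 0"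
  by (metis sc_inj sc_zero_right)

lemma sc_mono_scalar: "0 \<le> d \<Longrightarrow> a \<le> b \<Longrightarrow> sc a d \<le> sc b d"
proof -
  assume "0 \<le> d" "a \<le> b"
  have "0 \<le> sc (b - a) d"
    using \<open>0 \<le> d\<close> \<open>a \<le> b\<close> sc_strict_mono[of "b - a" 0 d]
    by (cases "d = 0"; cases "a = b") (auto simp: le_less)
  then show ?thesis by (simp add: sc_diff_left)
qed

lemma one_pos: "0 < (1 :: 'k)"
proof -
  have "0 \<le> (1::'k)" using zero_le_square[of "1::'k"] by simp
  moreover have "(1::'k) \<noteq> 0" by simp
  ultimately show ?thesis by (metis order_le_neq_trans)
qed

lemma two_pos: "0 < (1 + 1 :: 'k)"
  using add_pos_pos[OF one_pos one_pos] .

lemma sc_two: "sc (1 + 1) x = x + x" using sc_add_left[of 1 1 x] by (simp only: sc_one)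

lemma sc_half: "sc (inverse (1 + 1)) (x + x) = x"
  using two_pos by (metis sc_inv_left sc_two order_less_irrefl)

lemma inv_pos: "0 < (a::'k) \<Longrightarrow> 0 < inverse a"
proof (rule ccontr)
  assume a: "0 < a" "\<not> 0 < inverse a"
  then have "inverse a \<le> 0" by simp
  then have "a * inverse a \<le> 0" by (intro mult_nonneg_nonpos) (use a(1) in auto)
  then have "(1::'k) \<le> 0" using a(1) by simp
  then show False using one_pos by (simp add: not_le[symmetric])
qed

lemma mid: "x < y \<Longrightarrow> x < sc (inverse (1 + 1)) (x + y) \<and> sc (inverse (1 + 1)) (x + y) < y"
proof -
  assume "x < y"
  have h: "0 < inverse (1 + 1 :: 'k)" using inv_pos two_pos by blast
  have "x + x < x + y" "x + y < y + y" using \<open>x < y\<close> by simp_all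
  then show ?thesis using sc_strict_mono[OF h] sc_half by metis
qed


lemma dense2:
  fixes A B :: "'v set"
  assumes "finite A" "finite B" "\<forall>a\<in>A. \<forall>b\<in>B. a < b" and nt: "\<exists>r::'v. r \<noteq> 0"
  shows "\<exists>v. (\<forall>a\<in>A. a < v) \<and> (\<forall>b\<in>B. v < b)"
proof -
  obtain r0 :: 'v where "r0 \<noteq> 0" using nt by blast
  then have "r0 < 0 \<or> 0 < r0" by (simp add: linorder_neq_iff)
  then have "0 < - r0 \<or> 0 < r0" by simp
  then obtain r :: 'v where r: "0 < r" by blast
  show ?thesis
  proof (cases "A = {}")
    case True
    show ?thesis
    proof (cases "B = {}")
      case True
      then show ?thesis using \<open>A = {}\<close> by auto
    next
      case False
      have l: "Min B - r < Min B" using r by simp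
      have "\<forall>b\<in>B. Min B - r < b"
      proof
        fix b assume "b \<in> B"
        then have "Min B \<le> b" using assms(2) by simp
        then show "Min B - r < b" using l by order
      qed
      then show ?thesis using \<open>A = {}\<close> by blast
    qed
  next
    case False
    show ?thesis
    proof (cases "B = {}")
      case True
      have l: "Max A < Max A + r" using r by simp
      have "\<forall>a\<in>A. a < Max A + r"
      proof
        fix a assume "a \<in> A"
        then have "a \<le> Max A" using assms(1) by simp
        then show "a < Max A + r" using l by order
      qed
      then show ?thesis using True by blast
    next
      case BF: False
      have lt: "Max A < Min B" using assms False BF by simp
      note m = mid[OF lt]
      define M where "M = sc (inverse (1 + 1)) (Max A + Min B)"
      have "\<forall>a\<in>A. a < M"
      proof
        fix a assume "a \<in> A"
        then have "a \<le> Max A" using assms(1) by simp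
        then show "a < M" using m[THEN conjunct1] unfolding M_def by order
      qed
      moreover have "\<forall>b\<in>B. M < b"
      proof
        fix b assume "b \<in> B"
        then have "Min B \<le> b" using assms(2) by simp
        then show "M < b" using m[THEN conjunct2] unfolding M_def by order
      qed
      ultimately show ?thesis by blast
    qed
  qed
qed


definition leval :: "(nat \<times> 'k) list \<times> 'v \<Rightarrow> (nat \<Rightarrow> 'v) \<Rightarrow> 'v" where
  "leval f e = sum_list (map (\<lambda>(j,a). sc a (e j)) (fst f)) + snd f"

definition coef :: "nat \<Rightarrow> (nat \<times> 'k) list \<times> 'v \<Rightarrow> 'k" where
  "coef k f = sum_list (map (\<lambda>(j,a). if j = k then a else 0) (fst f))"

definition rem :: "nat \<Rightarrow> (nat \<times> 'k) list \<times> 'v \<Rightarrow> (nat \<times> 'k) list \<times> 'v" where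
  "rem k f = (filter (\<lambda>(j,a). j \<noteq> k) (fst f), snd f)"

definition lscale :: "'k \<Rightarrow> (nat \<times> 'k) list \<times> 'v \<Rightarrow> (nat \<times> 'k) list \<times> 'v" where
  "lscale m f = (map (\<lambda>(j,a). (j, m * a)) (fst f), sc m (snd f))"

definition ladd :: "(nat \<times> 'k) list \<times> 'v \<Rightarrow> (nat \<times> 'k) list \<times> 'v \<Rightarrow> (nat \<times> 'k) list \<times> 'v" where
  "ladd f g = (fst f @ fst g, snd f + snd g)"

definition lneg where "lneg f = lscale (-1) f"

definition lsubst where "lsubst k w f = ladd (lscale (coef k f) w) (rem k f)"

definition sol where "sol k f = lscale (- inverse (coef k f)) (rem k f)"

lemma split_aux: "sum_list (map (\<lambda>(j,a). sc a (e j)) p) =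
   sc (sum_list (map (\<lambda>(j,a). if j = k then a else 0) p)) (e k) +
   sum_list (map (\<lambda>(j,a). sc a (e j)) (filter (\<lambda>(j,a). j \<noteq> k) p))"
  by (induction p) (auto simp: sc_add_left add_ac)

lemma leval_split: "leval f e = sc (coef k f) (e k) + leval (rem k f) e"
  unfolding leval_def coef_def rem_def using split_aux[of e "fst f" k] by (simp add: add_ac)

lemma rem_aux: "sum_list (map (\<lambda>(j,a). sc a ((e(k:=v)) j)) (filter (\<lambda>(j,a). j \<noteq> k) p)) =
   sum_list (map (\<lambda>(j,a). sc a (e j)) (filter (\<lambda>(j,a). j \<noteq> k) p))"
  by (induction p) auto

lemma leval_rem_upd: "leval (rem k f) (e(k:=v)) = leval (rem k f) e"
  unfolding leval_def rem_def using rem_aux[where k=k and v=v and e=e and p="fst f"] by simp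

lemma leval_upd: "leval f (e(k:=v)) = sc (coef k f) v + leval (rem k f) e"
  using leval_split[of f "e(k:=v)" k] by (simp add: leval_rem_upd)

lemma leval_upd0: "leval f (e(k:=v)) = sc (coef k f) v + leval f (e(k:=0))"
  by (simp add: leval_upd)

lemma scale_aux: "sum_list (map (\<lambda>(j,a). sc a (e j)) (map (\<lambda>(j,a). (j, m * a)) p)) =
   sc m (sum_list (map (\<lambda>(j,a). sc a (e j)) p))"
  by (induction p) (auto simp: sc_add_right sc_mult)

lemma leval_scale: "leval (lscale m f) e = sc m (leval f e)"
  unfolding leval_def lscale_def using scale_aux[of e m "fst f"] by (simp add: sc_add_right)

lemma leval_add: "leval (ladd f g) e = leval f e + leval g e"
  unfolding leval_def ladd_def by (simp add: add_ac)

lemma leval_neg: "leval (lneg f) e = - leval f e"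
  unfolding lneg_def leval_scale by (simp add: sc_minus_left sc_one)

lemma leval_subst: "leval (lsubst k w f) e = sc (coef k f) (leval w e) + leval (rem k f) e"
  unfolding lsubst_def by (simp add: leval_add leval_scale)

lemma leval_sol: "leval (sol k f) e = - sc (inverse (coef k f)) (leval (rem k f) e)"
  unfolding sol_def by (simp add: leval_scale sc_minus_left)

lemma sc_sol: "coef k f \<noteq> 0 \<Longrightarrow> sc (coef k f) (leval (sol k f) e) = - leval (rem k f) e"
  by (simp add: leval_sol sc_minus_right sc_inv_right)


definition holds :: "(nat \<Rightarrow> 'v) \<Rightarrow> ((nat \<times> 'k) list \<times> 'v) \<times> bool \<Rightarrow> bool" where
  "holds e b = (if snd b then leval (fst b) e = 0 else leval (fst b) e < 0)"

definition dsat :: "(nat \<Rightarrow> 'v) \<Rightarrow> (((nat \<times> 'k) list \<times> 'v) \<times> bool) list list \<Rightarrow> bool" where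
  "dsat e D = (\<exists>c\<in>set D. \<forall>b\<in>set c. holds e b)"

definition dconj where "dconj D1 D2 = concat (map (\<lambda>c1. map (\<lambda>c2. c1 @ c2) D2) D1)"

lemma dsat_conj: "dsat e (dconj D1 D2) \<longleftrightarrow> dsat e D1 \<and> dsat e D2"
  unfolding dsat_def dconj_def by auto

lemma dsat_concat: "dsat e (concat Ds) \<longleftrightarrow> (\<exists>D\<in>set Ds. dsat e D)"
  unfolding dsat_def by auto

definition neg_atom where
  "neg_atom b = (if snd b then [[(fst b, False)],[(lneg (fst b), False)]]
                 else [[(fst b, True)],[(lneg (fst b), False)]])"

lemma dsat_neg_atom: "dsat e (neg_atom b) \<longleftrightarrow> \<not> holds e b"
  unfolding dsat_def neg_atom_def holds_def
  by (auto simp: leval_neg linorder_neq_iff)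

definition neg_cell where "neg_cell c = concat (map neg_atom c)"

lemma dsat_neg_cell: "dsat e (neg_cell c) \<longleftrightarrow> (\<exists>b\<in>set c. \<not> holds e b)"
  unfolding neg_cell_def dsat_concat by (auto simp: dsat_neg_atom)

fun dneg where
  "dneg [] = [[]]"
| "dneg (c # D) = dconj (neg_cell c) (dneg D)"

lemma dsat_neg: "dsat e (dneg D) \<longleftrightarrow> \<not> dsat e D"
proof (induction D)
  case Nil
  then show ?case by (simp add: dsat_def)
next
  case (Cons c D)
  then show ?case by (auto simp: dsat_conj dsat_neg_cell) (auto simp: dsat_def)
qed

lemma atom_upd:
  "holds (e(k:=v)) b \<longleftrightarrow>
    (if coef k (fst b) = 0 then holds e (rem k (fst b), snd b)
     else if snd b then v = leval (sol k (fst b)) e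
     else if 0 < coef k (fst b) then v < leval (sol k (fst b)) e
     else leval (sol k (fst b)) e < v)"
proof -
  define a where "a = coef k (fst b)"
  define W where "W = leval (sol k (fst b)) e"
  define g where "g = leval (rem k (fst b)) e"
  have ev: "leval (fst b) (e(k:=v)) = sc a v + g"
    unfolding a_def g_def by (rule leval_upd)
  show ?thesis
  proof (cases "a = 0")
    case True
    then show ?thesis using ev unfolding a_def[symmetric] holds_def g_def by simp
  next
    case False
    have sW: "sc a W = - g" unfolding a_def W_def g_def using False a_def sc_sol by blast
    have ev2: "leval (fst b) (e(k:=v)) = sc a (v - W)"
      using ev sW by (simp add: sc_diff_right)
    have e1: "sc a (v - W) = 0 \<longleftrightarrow> v = W" using sc_zero_iff[OF False] by simp
    have e2: "sc a (v - W) < 0 \<longleftrightarrow> (0 < a \<and> v < W) \<or> (a < 0 \<and> W < v)"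
      using sc_neg_iff[OF False] by simp
    show ?thesis
      unfolding holds_def ev2 a_def[symmetric] W_def[symmetric] using False e1 e2
      by (auto simp: linorder_neq_iff)
  qed
qed

lemma holds_subst: "holds e (lsubst k w (fst b), snd b) \<longleftrightarrow> holds (e(k := leval w e)) b"
  unfolding holds_def by (simp add: leval_subst leval_upd)

definition lows where "lows k c = map (\<lambda>b. sol k (fst b)) (filter (\<lambda>b. \<not> snd b \<and> coef k (fst b) < 0) c)"
definition ups where "ups k c = map (\<lambda>b. sol k (fst b)) (filter (\<lambda>b. \<not> snd b \<and> 0 < coef k (fst b)) c)"

definition elim where
  "elim k c = (case find (\<lambda>b. snd b \<and> coef k (fst b) \<noteq> 0) c of
     Some a \<Rightarrow> [map (\<lambda>b. (lsubst k (sol k (fst a)) (fst b), snd b)) c]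
   | None \<Rightarrow> [map (\<lambda>b. (rem k (fst b), snd b)) (filter (\<lambda>b. coef k (fst b) = 0) c) @
             concat (map (\<lambda>l. map (\<lambda>u. (ladd l (lneg u), False)) (ups k c)) (lows k c))])"

lemma elim_correct:
  assumes nt: "\<exists>r::'v. r \<noteq> 0"
  shows "(\<exists>v. \<forall>b\<in>set c. holds (e(k:=v)) b) \<longleftrightarrow> dsat e (elim k c)"
proof (cases "find (\<lambda>b. snd b \<and> coef k (fst b) \<noteq> 0) c")
  case (Some a)
  then have a: "a \<in> set c" "snd a" "coef k (fst a) \<noteq> 0" by (auto simp: find_Some_iff)
  define W where "W = leval (sol k (fst a)) e"
  have el: "dsat e (elim k c) \<longleftrightarrow> (\<forall>b\<in>set c. holds (e(k:=W)) b)"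
    unfolding elim_def Some dsat_def W_def by (auto simp: holds_subst)
  have "(\<exists>v. \<forall>b\<in>set c. holds (e(k:=v)) b) \<longleftrightarrow> (\<forall>b\<in>set c. holds (e(k:=W)) b)"
  proof
    assume "\<exists>v. \<forall>b\<in>set c. holds (e(k:=v)) b"
    then obtain v where v: "\<forall>b\<in>set c. holds (e(k:=v)) b" by blast
    then have "holds (e(k:=v)) a" using a by blast
    then have "v = W" using a atom_upd[of e k v a] unfolding W_def by simp
    then show "\<forall>b\<in>set c. holds (e(k:=W)) b" using v by simp
  qed blast
  then show ?thesis using el by simp
next
  case None
  then have noeq: "\<And>b. b \<in> set c \<Longrightarrow> snd b \<Longrightarrow> coef k (fst b) = 0" by (auto simp: find_None_iff)
  define Z where "Z = (\<forall>b\<in>set c. coef k (fst b) = 0 \<longrightarrow> holds e (rem k (fst b), snd b))"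
  have iff: "(\<forall>b\<in>set c. holds (e(k:=v)) b) \<longleftrightarrow>
     Z \<and> (\<forall>l\<in>set (lows k c). leval l e < v) \<and> (\<forall>u\<in>set (ups k c). v < leval u e)" for v
  proof
    assume h: "\<forall>b\<in>set c. holds (e(k:=v)) b"
    have "Z" unfolding Z_def
    proof (intro ballI impI)
      fix b assume "b \<in> set c" "coef k (fst b) = 0"
      then show "holds e (rem k (fst b), snd b)" using h atom_upd[of e k v b] by simp
    qed
    moreover have "\<forall>l\<in>set (lows k c). leval l e < v"
    proof
      fix l assume "l \<in> set (lows k c)"
      then obtain b where b: "b \<in> set c" "\<not> snd b" "coef k (fst b) < 0" "l = sol k (fst b)"
        unfolding lows_def by auto
      then show "leval l e < v" using h atom_upd[of e k v b] by auto
    qed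
    moreover have "\<forall>u\<in>set (ups k c). v < leval u e"
    proof
      fix u assume "u \<in> set (ups k c)"
      then obtain b where b: "b \<in> set c" "\<not> snd b" "0 < coef k (fst b)" "u = sol k (fst b)"
        unfolding ups_def by auto
      then show "v < leval u e" using h atom_upd[of e k v b] by auto
    qed
    ultimately show "Z \<and> (\<forall>l\<in>set (lows k c). leval l e < v) \<and> (\<forall>u\<in>set (ups k c). v < leval u e)"
      by blast
  next
    assume h: "Z \<and> (\<forall>l\<in>set (lows k c). leval l e < v) \<and> (\<forall>u\<in>set (ups k c). v < leval u e)"
    show "\<forall>b\<in>set c. holds (e(k:=v)) b"
    proof
      fix b assume b: "b \<in> set c"
      show "holds (e(k:=v)) b"
      proof (cases "coef k (fst b) = 0")
        case True
        then show ?thesis using h b atom_upd[of e k v b] unfolding Z_def by simp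
      next
        case False
        then have ns: "\<not> snd b" using noeq b by blast
        show ?thesis
        proof (cases "0 < coef k (fst b)")
          case True
          then have "sol k (fst b) \<in> set (ups k c)" using ns b unfolding ups_def by auto
          then show ?thesis using h False True ns atom_upd[of e k v b] by auto
        next
          case F2: False
          then have "coef k (fst b) < 0" using False by (simp add: linorder_neq_iff)
          then have "sol k (fst b) \<in> set (lows k c)" using ns b unfolding lows_def by auto
          then show ?thesis using h False F2 ns atom_upd[of e k v b] by auto
        qed
      qed
    qed
  qed
  have ex: "(\<exists>v. (\<forall>l\<in>set (lows k c). leval l e < v) \<and> (\<forall>u\<in>set (ups k c). v < leval u e))
      \<longleftrightarrow> (\<forall>l\<in>set (lows k c). \<forall>u\<in>set (ups k c). leval l e < leval u e)"
  proof
    assume "\<exists>v. (\<forall>l\<in>set (lows k c). leval l e < v) \<and> (\<forall>u\<in>set (ups k c). v < leval u e)"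
    then show "\<forall>l\<in>set (lows k c). \<forall>u\<in>set (ups k c). leval l e < leval u e"
      by (meson order_less_trans)
  next
    assume h: "\<forall>l\<in>set (lows k c). \<forall>u\<in>set (ups k c). leval l e < leval u e"
    have "\<exists>v. (\<forall>a\<in>(\<lambda>l. leval l e) ` set (lows k c). a < v) \<and> (\<forall>b\<in>(\<lambda>u. leval u e) ` set (ups k c). v < b)"
      by (rule dense2[OF _ _ _ nt]) (use h in auto)
    then show "\<exists>v. (\<forall>l\<in>set (lows k c). leval l e < v) \<and> (\<forall>u\<in>set (ups k c). v < leval u e)"
      by auto
  qed
  have el: "dsat e (elim k c) \<longleftrightarrow> Z \<and> (\<forall>l\<in>set (lows k c). \<forall>u\<in>set (ups k c). leval l e < leval u e)"
  proof -
    have hl: "holds e (ladd l (lneg u), False) \<longleftrightarrow> leval l e < leval u e" for l u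
      by (simp add: holds_def leval_add leval_neg)
    have "dsat e (elim k c) \<longleftrightarrow> Z \<and> (\<forall>l\<in>set (lows k c). \<forall>u\<in>set (ups k c). holds e (ladd l (lneg u), False))"
      unfolding elim_def None dsat_def Z_def by auto
    then show ?thesis using hl by simp
  qed
  show ?thesis using iff ex el by auto
qed

definition elimD where "elimD k D = concat (map (elim k) D)"

lemma elimD_correct:
  assumes nt: "\<exists>r::'v. r \<noteq> 0"
  shows "dsat e (elimD k D) \<longleftrightarrow> (\<exists>v. dsat (e(k:=v)) D)"
proof -
  have "dsat e (elimD k D) \<longleftrightarrow> (\<exists>c\<in>set D. dsat e (elim k c))"
    unfolding elimD_def dsat_concat by auto
  also have "\<dots> \<longleftrightarrow> (\<exists>c\<in>set D. \<exists>v. \<forall>b\<in>set c. holds (e(k:=v)) b)"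
    using elim_correct[OF nt] by blast
  also have "\<dots> \<longleftrightarrow> (\<exists>v. dsat (e(k:=v)) D)"
    unfolding dsat_def by blast
  finally show ?thesis .
qed

primrec tf :: "('k,'v) tm \<Rightarrow> (nat \<times> 'k) list \<times> 'v" where
  "tf (Var i) = ([(i,1)], 0)"
| "tf (Cst c) = ([], c)"
| "tf Zero = ([], 0)"
| "tf (Plus s t) = ladd (tf s) (tf t)"
| "tf (Scal a t) = lscale a (tf t)"

lemma leval_tf: "leval (tf t) e = eval_tm sc e t"
  apply (induction t)
      apply (simp_all add: leval_add leval_scale)
  apply (simp_all add: leval_def sc_one)
  done

primrec fD :: "('k,'v) fm \<Rightarrow> (((nat \<times> 'k) list \<times> 'v) \<times> bool) list list" where
  "fD (Eq s t) = [[(ladd (tf s) (lneg (tf t)), True)]]"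
| "fD (Less s t) = [[(ladd (tf s) (lneg (tf t)), False)]]"
| "fD (Neg f) = dneg (fD f)"
| "fD (Conj f g) = dconj (fD f) (fD g)"
| "fD (Ex i f) = elimD i (fD f)"

lemma fD_correct:
  assumes nt: "\<exists>r::'v. r \<noteq> 0"
  shows "dsat e (fD \<phi>) \<longleftrightarrow> sat sc e \<phi>"
proof (induction \<phi> arbitrary: e)
  case (Eq s t)
  then show ?case by (simp add: dsat_def holds_def leval_add leval_neg leval_tf)
next
  case (Less s t)
  then show ?case by (simp add: dsat_def holds_def leval_add leval_neg leval_tf)
next
  case (Neg f)
  then show ?case by (simp add: dsat_neg)
next
  case (Conj f g)
  then show ?case by (simp add: dsat_conj)
next
  case (Ex i f)
  then show ?case by (simp add: elimD_correct[OF nt] fun_upd_def)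
qed


lemma agree_ends:
  fixes f g :: "'v \<Rightarrow> 'v"
  assumes pu: "p < u" and cf: "continuous_on {p..u} f" and cg: "continuous_on {p..u} g"
    and eq: "\<And>t. p < t \<Longrightarrow> t < u \<Longrightarrow> f t = g t"
  shows "f u = g u \<and> f p = g p"
proof
  have lim: "u islimpt {p<..<u}"
  proof (rule islimptI)
    fix T assume "u \<in> T" "open T"
    then obtain b where b: "b < u" "{b<..u} \<subseteq> T" using open_left[OF \<open>open T\<close> \<open>u \<in> T\<close> pu] by blast
    have "max b p < u" using b pu by simp
    note m = mid[OF this]
    define y where "y = sc (inverse (1 + 1)) (max b p + u)"
    have "max b p < y" "y < u" using m unfolding y_def by auto
    then have "y \<in> {p<..<u}" "y \<in> T" "y \<noteq> u" using b by auto
    then show "\<exists>y\<in>{p<..<u}. y \<in> T \<and> y \<noteq> u" by blast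
  qed
  have F: "at u within {p<..<u} \<noteq> bot" using lim trivial_limit_within by blast
  have "(f \<longlongrightarrow> f u) (at u within {p..u})" using cf pu by (simp add: continuous_on_def)
  then have tf: "(f \<longlongrightarrow> f u) (at u within {p<..<u})" by (rule tendsto_within_subset) auto
  have "(g \<longlongrightarrow> g u) (at u within {p..u})" using cg pu by (simp add: continuous_on_def)
  then have tg: "(g \<longlongrightarrow> g u) (at u within {p<..<u})" by (rule tendsto_within_subset) auto
  have ev: "eventually (\<lambda>t. f t = g t) (at u within {p<..<u})"
    unfolding eventually_at_filter using eq by (auto intro: always_eventually)
  have "(g \<longlongrightarrow> f u) (at u within {p<..<u})" using tf tendsto_cong[OF ev] by simp
  then show "f u = g u" using tendsto_unique[OF F _ tg] by blast
next
  have lim: "p islimpt {p<..<u}"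
  proof (rule islimptI)
    fix T assume "p \<in> T" "open T"
    then obtain b where b: "p < b" "{p..<b} \<subseteq> T" using open_right[OF \<open>open T\<close> \<open>p \<in> T\<close> pu] by blast
    have "p < min b u" using b pu by simp
    note m = mid[OF this]
    define y where "y = sc (inverse (1 + 1)) (p + min b u)"
    have "p < y" "y < min b u" using m unfolding y_def by auto
    then have "y \<in> {p<..<u}" "y \<in> T" "y \<noteq> p" using b by auto
    then show "\<exists>y\<in>{p<..<u}. y \<in> T \<and> y \<noteq> p" by blast
  qed
  have F: "at p within {p<..<u} \<noteq> bot" using lim trivial_limit_within by blast
  have "(f \<longlongrightarrow> f p) (at p within {p..u})" using cf pu by (simp add: continuous_on_def)
  then have tf: "(f \<longlongrightarrow> f p) (at p within {p<..<u})" by (rule tendsto_within_subset) auto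
  have "(g \<longlongrightarrow> g p) (at p within {p..u})" using cg pu by (simp add: continuous_on_def)
  then have tg: "(g \<longlongrightarrow> g p) (at p within {p<..<u})" by (rule tendsto_within_subset) auto
  have ev: "eventually (\<lambda>t. f t = g t) (at p within {p<..<u})"
    unfolding eventually_at_filter using eq by (auto intro: always_eventually)
  have "(g \<longlongrightarrow> f p) (at p within {p<..<u})" using tf tendsto_cong[OF ev] by simp
  then show "f p = g p" using tendsto_unique[OF F _ tg] by blast
qed

lemma mono_surj_cont:
  fixes g :: "'v \<Rightarrow> 'v"
  assumes m: "\<And>x y. x < y \<Longrightarrow> g x < g y" and s: "surj g"
  shows "isCont g t"
  unfolding isCont_def
proof (rule order_tendstoI)
  fix a assume "a < g t"
  obtain a' where a': "a = g a'" using s by (metis surj_def)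
  then have "a' < t" using \<open>a < g t\<close> m by (metis linorder_neq_iff order_less_asym)
  then have "eventually (\<lambda>x. a' < x) (at t)" using order_tendstoD(1)[OF tendsto_ident_at] by blast
  then show "eventually (\<lambda>x. a < g x) (at t)" using a' m by (auto elim: eventually_mono)
next
  fix a assume "g t < a"
  obtain a' where a': "a = g a'" using s by (metis surj_def)
  then have "t < a'" using \<open>g t < a\<close> m by (metis linorder_neq_iff order_less_asym)
  then have "eventually (\<lambda>x. x < a') (at t)" using order_tendstoD(2)[OF tendsto_ident_at] by blast
  then show "eventually (\<lambda>x. g x < a) (at t)" using a' m by (auto elim: eventually_mono)
qed

lemma anti_surj_cont:
  fixes g :: "'v \<Rightarrow> 'v"
  assumes m: "\<And>x y. x < y \<Longrightarrow> g y < g x" and s: "surj g"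
  shows "isCont g t"
  unfolding isCont_def
proof (rule order_tendstoI)
  fix a assume "a < g t"
  obtain a' where a': "a = g a'" using s by (metis surj_def)
  then have "t < a'" using \<open>a < g t\<close> m by (metis linorder_neq_iff order_less_asym)
  then have "eventually (\<lambda>x. x < a') (at t)" using order_tendstoD(2)[OF tendsto_ident_at] by blast
  then show "eventually (\<lambda>x. a < g x) (at t)" using a' m by (auto elim: eventually_mono)
next
  fix a assume "g t < a"
  obtain a' where a': "a = g a'" using s by (metis surj_def)
  then have "a' < t" using \<open>g t < a\<close> m by (metis linorder_neq_iff order_less_asym)
  then have "eventually (\<lambda>x. a' < x) (at t)" using order_tendstoD(1)[OF tendsto_ident_at] by blast
  then show "eventually (\<lambda>x. g x < a) (at t)" using a' m by (auto elim: eventually_mono)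
qed

lemma affine_cont: "continuous_on S (\<lambda>t. sc s t + c0)"
proof (cases "s = 0")
  case True
  then show ?thesis by (simp add: continuous_on_const)
next
  case False
  have sj: "surj (\<lambda>t. sc s t + c0)"
  proof (rule surjI[of _ "\<lambda>z. sc (inverse s) (z - c0)"])
    fix z show "sc s (sc (inverse s) (z - c0)) + c0 = z" using False by (simp add: sc_inv_right)
  qed
  show ?thesis
  proof (cases "0 < s")
    case True
    show ?thesis
      by (rule continuous_at_imp_continuous_on, rule ballI, rule mono_surj_cont[OF _ sj])
        (use True sc_strict_mono in auto)
  next
    case F2: False
    then have "s < 0" using False by (simp add: linorder_neq_iff)
    show ?thesis
      by (rule continuous_at_imp_continuous_on, rule ballI, rule anti_surj_cont[OF _ sj])
        (use \<open>s < 0\<close> sc_anti in auto)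
  qed
qed


lemma perturb:
  assumes nt: "\<exists>r::'v. r \<noteq> 0"
    and hc: "\<forall>b\<in>set c. holds (E y) b"
    and noeq: "\<forall>b\<in>set c. snd b \<longrightarrow> coef kY (fst b) = 0"
    and lin: "\<And>f z. leval f (E z) = sc (coef kY f) z + K f"
  shows "\<exists>\<delta>>0. \<forall>b\<in>set c. holds (E (y + \<delta>)) b"
proof -
  let ?P = "{b\<in>set c. \<not> snd b \<and> 0 < coef kY (fst b)}"
  define Bs where "Bs = (\<lambda>b. sc (inverse (coef kY (fst b))) (- leval (fst b) (E y))) ` ?P"
  have shift: "leval f (E (y + d)) = sc (coef kY f) d + leval f (E y)" for f d
    using lin[of f "y + d"] lin[of f y] by (simp add: sc_add_right add_ac)
  have pos: "\<forall>a\<in>{0}. \<forall>w\<in>Bs. a < w"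
  proof (intro ballI)
    fix a w assume "a \<in> {0::'v}" "w \<in> Bs"
    then obtain b where b: "b \<in> ?P" "w = sc (inverse (coef kY (fst b))) (- leval (fst b) (E y))" "a = 0"
      unfolding Bs_def by auto
    have neg: "leval (fst b) (E y) < 0" using hc b(1) unfolding holds_def by auto
    have bp: "0 < coef kY (fst b)" using b(1) by auto
    then have "sc (coef kY (fst b)) w = - leval (fst b) (E y)" using b(2) by (simp add: sc_inv_right)
    then have "sc (coef kY (fst b)) 0 < sc (coef kY (fst b)) w" using neg by simp
    then show "a < w" using sc_less_pos[OF bp] b(3) by blast
  qed
  obtain \<delta> where d: "\<forall>a\<in>{0}. a < \<delta>" "\<forall>w\<in>Bs. \<delta> < w"
    using dense2[OF _ _ pos nt] unfolding Bs_def by auto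
  have "\<forall>b\<in>set c. holds (E (y + \<delta>)) b"
  proof
    fix b assume b: "b \<in> set c"
    show "holds (E (y + \<delta>)) b"
    proof (cases "snd b")
      case True
      then show ?thesis using hc b noeq shift unfolding holds_def by simp
    next
      case False
      have v: "leval (fst b) (E y) < 0" using hc b False unfolding holds_def by auto
      have "sc (coef kY (fst b)) \<delta> + leval (fst b) (E y) < 0"
      proof (cases "0 < coef kY (fst b)")
        case True
        then have "b \<in> ?P" using b False by auto
        then have "sc (inverse (coef kY (fst b))) (- leval (fst b) (E y)) \<in> Bs" unfolding Bs_def by (rule imageI)
        then have "\<delta> < sc (inverse (coef kY (fst b))) (- leval (fst b) (E y))" using d(2) by blast
        then have "sc (coef kY (fst b)) \<delta> < sc (coef kY (fst b)) (sc (inverse (coef kY (fst b))) (- leval (fst b) (E y)))"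
          using sc_strict_mono[OF True] by blast
        then have "sc (coef kY (fst b)) \<delta> < - leval (fst b) (E y)" using True by (simp add: sc_inv_right)
        then have "sc (coef kY (fst b)) \<delta> + leval (fst b) (E y) < - leval (fst b) (E y) + leval (fst b) (E y)"
          by (rule add_strict_right_mono)
        then show ?thesis by simp
      next
        case F2: False
        have "sc (coef kY (fst b)) \<delta> \<le> 0"
        proof (cases "coef kY (fst b) = 0")
          case True then show ?thesis by simp
        next
          case False
          then have "coef kY (fst b) < 0" using F2 by (simp add: linorder_neq_iff)
          then have "sc (coef kY (fst b)) \<delta> < sc (coef kY (fst b)) 0" using sc_anti d(1) by blast
          then show ?thesis by simp
        qed
        then show ?thesis using v by (simp add: add_nonpos_neg)
      qed
      then show ?thesis using False shift unfolding holds_def by simp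
    qed
  qed
  then show ?thesis using d(1) by auto
qed


lemma slope_bound:
  assumes nt: "\<exists>r::'v. r \<noteq> 0"
    and kTY: "kT \<noteq> kY"
    and hc: "continuous_on {0..q} h"
    and graph: "\<And>t y. dsat (e00(kT:=t, kY:=y)) D \<longleftrightarrow> (t \<in> {0..q} \<and> y = h t)"
    and u: "u \<in> {0..q}"
  shows "h u - h 0 \<le> sc (\<Sum>b\<in>set (concat D). \<bar>inverse (coef kY (fst b)) * coef kT (fst b)\<bar>) u \<and>
         h 0 - h u \<le> sc (\<Sum>b\<in>set (concat D). \<bar>inverse (coef kY (fst b)) * coef kT (fst b)\<bar>) u"
proof -
  define C where "C = (\<Sum>b\<in>set (concat D). \<bar>inverse (coef kY (fst b)) * coef kT (fst b)\<bar>)"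
  define E where "E = (\<lambda>t y. e00(kT:=t, kY:=y))"
  define e1 where "e1 = e00(kY:=0)"
  have E0: "E t 0 = e1(kT:=t)" for t unfolding E_def e1_def using kTY by (simp add: fun_upd_twist)
  have EY: "E t y = (E t 0)(kY:=y)" for t y unfolding E_def by simp
  have lin: "leval f (E t y) = sc (coef kY f) y + (sc (coef kT f) t + leval f (e1(kT:=0)))" for f t y
  proof -
    have "leval f (E t y) = sc (coef kY f) y + leval f ((E t 0)(kY:=0))"
      using leval_upd0[of f "E t 0" kY y] EY[of t y] by simp
    also have "(E t 0)(kY:=0) = E t 0" unfolding E_def by simp
    also have "leval f (E t 0) = sc (coef kT f) t + leval f (e1(kT:=0))"
      using E0[of t] leval_upd0[of f e1 kT t] by simp
    finally show ?thesis .
  qed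
  have CS: "\<bar>inverse (coef kY (fst b)) * coef kT (fst b)\<bar> \<le> C" if "b \<in> set (concat D)" for b
    unfolding C_def by (rule member_le_sum) (use that in auto)
  have gr: "dsat (E t y) D \<longleftrightarrow> t \<in> {0..q} \<and> y = h t" for t y using graph unfolding E_def by blast
  define allB where "allB = concat (map (\<lambda>c. concat (elim kY c)) D)"
  define Crit where "Crit = insert 0 ((\<lambda>b. leval (sol kT (fst b)) e1) ` set allB)"
  have finC: "finite Crit" unfolding Crit_def by simp
  have f2: "(\<exists>y. \<forall>b\<in>set c. holds (E t y) b) \<longleftrightarrow> dsat (E t 0) (elim kY c)" for c t
  proof -
    have "(\<exists>y. \<forall>b\<in>set c. holds (E t y) b) \<longleftrightarrow> (\<exists>y. \<forall>b\<in>set c. holds ((E t 0)(kY:=y)) b)"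
      by (metis EY)
    then show ?thesis using elim_correct[OF nt, of c "E t 0" kY] by simp
  qed
  have f1: "dsat (E t 0) (elim kY c) \<longleftrightarrow> dsat (E t' 0) (elim kY c)"
    if nc: "\<forall>w\<in>Crit. \<not> (p < w \<and> w < u')" and tt: "p < t" "t < u'" "p < t'" "t' < u'" and cD: "c \<in> set D"
    for p u' t t' c
  proof -
    have at: "holds (E t 0) b \<longleftrightarrow> holds (E t' 0) b" if bB: "b \<in> set allB" for b
    proof -
      let ?W = "leval (sol kT (fst b)) e1"
      have "?W \<in> Crit" unfolding Crit_def using bB by auto
      then have "?W \<le> p \<or> u' \<le> ?W" using nc by (meson linorder_not_le)
      then show ?thesis
      proof
        assume "?W \<le> p"
        then have "?W < t" "?W < t'" "\<not> t < ?W" "\<not> t' < ?W" "t \<noteq> ?W" "t' \<noteq> ?W" using tt by order+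
        then show ?thesis unfolding E0 atom_upd by simp
      next
        assume "u' \<le> ?W"
        then have "\<not> ?W < t" "\<not> ?W < t'" "t < ?W" "t' < ?W" "t \<noteq> ?W" "t' \<noteq> ?W" using tt by order+
        then show ?thesis unfolding E0 atom_upd by simp
      qed
    qed
    have "\<forall>c'\<in>set (elim kY c). \<forall>b\<in>set c'. b \<in> set allB" unfolding allB_def using cD by auto
    then show ?thesis unfolding dsat_def using at by blast
  qed
  have local: "h u' - h p \<le> sc C (u' - p) \<and> h p - h u' \<le> sc C (u' - p)"
    if a: "0 \<le> p" "p < u'" "u' \<le> q" "\<forall>w\<in>Crit. \<not> (p < w \<and> w < u')" for p u'
  proof -
    define m where "m = sc (inverse (1 + 1)) (p + u')"
    have m: "p < m" "m < u'" using mid[OF a(2)] unfolding m_def by auto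
    have "m \<in> {0..q}" using a m by auto
    then have "dsat (E m (h m)) D" using gr by simp
    then obtain c where c: "c \<in> set D" "\<forall>b\<in>set c. holds (E m (h m)) b" unfolding dsat_def by blast
    have "\<exists>b\<in>set c. snd b \<and> coef kY (fst b) \<noteq> 0"
    proof (rule ccontr)
      assume "\<not> (\<exists>b\<in>set c. snd b \<and> coef kY (fst b) \<noteq> 0)"
      then have noeq: "\<forall>b\<in>set c. snd b \<longrightarrow> coef kY (fst b) = 0" by blast
      obtain \<delta> where d: "\<delta> > 0" "\<forall>b\<in>set c. holds (E m (h m + \<delta>)) b"
        using perturb[where E="E m" and y="h m" and c=c and kY=kY
            and K="\<lambda>f. sc (coef kT f) m + leval f (e1(kT:=0))", OF nt c(2) noeq lin] by blast
      then have "dsat (E m (h m + \<delta>)) D" using c(1) unfolding dsat_def by blast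
      then have "h m + \<delta> = h m" using gr by simp
      then show False using d(1) by simp
    qed
    then obtain b where b: "b \<in> set c" "snd b" "coef kY (fst b) \<noteq> 0" by blast
    define \<alpha> where "\<alpha> = coef kT (fst b)"
    define \<beta> where "\<beta> = coef kY (fst b)"
    define \<kappa> where "\<kappa> = leval (fst b) (e1(kT:=0))"
    define s where "s = - (inverse \<beta> * \<alpha>)"
    define c0 where "c0 = - sc (inverse \<beta>) \<kappa>"
    have bnz: "\<beta> \<noteq> 0" using b unfolding \<beta>_def by simp
    have eqL: "h t = sc s t + c0" if t: "p < t" "t < u'" for t
    proof -
      have "\<exists>y. \<forall>b\<in>set c. holds (E m y) b" using c(2) by blast
      then have "dsat (E m 0) (elim kY c)" using f2 by blast
      then have "dsat (E t 0) (elim kY c)" using f1[OF a(4) m t c(1)] by blast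
      then obtain y where y: "\<forall>b\<in>set c. holds (E t y) b" using f2 by blast
      then have "dsat (E t y) D" using c(1) unfolding dsat_def by blast
      then have yh: "y = h t" using gr by simp
      have "leval (fst b) (E t y) = 0" using y b unfolding holds_def by auto
      then have "sc \<beta> y + (sc \<alpha> t + \<kappa>) = 0" using lin unfolding \<alpha>_def \<beta>_def \<kappa>_def by simp
      then have "sc \<beta> y = - (sc \<alpha> t + \<kappa>)" by (simp only: eq_neg_iff_add_eq_0)
      then have "sc (inverse \<beta>) (sc \<beta> y) = sc (inverse \<beta>) (- (sc \<alpha> t + \<kappa>))" by simp
      then have "y = sc (inverse \<beta>) (- (sc \<alpha> t + \<kappa>))" using sc_inv_left[OF bnz] by simp
      also have "\<dots> = sc s t + c0" unfolding s_def c0_def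
        by (simp add: sc_minus_right sc_add_right sc_diff_right sc_mult sc_minus_left add_ac)
      finally show ?thesis using yh by simp
    qed
    have "{p..u'} \<subseteq> {0..q}" using a by auto
    then have hc': "continuous_on {p..u'} h" using hc continuous_on_subset by blast
    have Lc: "continuous_on {p..u'} (\<lambda>t. sc s t + c0)" by (rule affine_cont)
    have ends: "h u' = sc s u' + c0 \<and> h p = sc s p + c0"
      using agree_ends[OF a(2) hc' Lc eqL] by blast
    then have diff: "h u' - h p = sc s (u' - p)" by (simp add: sc_diff_right)
    have "b \<in> set (concat D)" using b(1) c(1) by auto
    then have sC: "\<bar>s\<bar> \<le> C" using CS unfolding s_def \<alpha>_def \<beta>_def by simp
    have d0: "0 \<le> u' - p" using a(2) by simp
    have "s \<le> C" using sC abs_ge_self order_trans by blast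
    then have 1: "sc s (u' - p) \<le> sc C (u' - p)" using sc_mono_scalar[OF d0] by blast
    have "- s \<le> C" using sC abs_ge_minus_self order_trans by blast
    then have "sc (- s) (u' - p) \<le> sc C (u' - p)" using sc_mono_scalar[OF d0] by blast
    then have 2: "- sc s (u' - p) \<le> sc C (u' - p)" by (simp add: sc_minus_left)
    show ?thesis using 1 2 diff by (metis minus_diff_eq)
  qed
  have main: "card {w\<in>Crit. w < u'} = n \<Longrightarrow> u' \<in> {0..q} \<Longrightarrow>
      h u' - h 0 \<le> sc C u' \<and> h 0 - h u' \<le> sc C u'" for n u'
  proof (induction n arbitrary: u' rule: less_induct)
    case (less n u')
    show ?case
    proof (cases "u' = 0")
      case True
      then show ?thesis by simp
    next
      case False
      then have u0: "0 < u'" using less.prems(2) by auto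
      define S where "S = {w\<in>Crit. w < u'}"
      have finS: "finite S" unfolding S_def using finC by simp
      have "0 \<in> S" unfolding S_def Crit_def using u0 by simp
      then have Sne: "S \<noteq> {}" by blast
      define p where "p = Max S"
      have pS: "p \<in> S" unfolding p_def using finS Sne by simp
      then have pu: "p < u'" unfolding S_def by simp
      have p0: "0 \<le> p" unfolding p_def using finS \<open>0 \<in> S\<close> by simp
      have sub: "{w\<in>Crit. w < p} \<subset> S" unfolding S_def using pS pu unfolding S_def by auto
      then have "card {w\<in>Crit. w < p} < n" using psubset_card_mono[OF finS sub] less.prems(1) unfolding S_def by simp
      moreover have "p \<in> {0..q}" using p0 pu less.prems(2) by auto
      ultimately have IH: "h p - h 0 \<le> sc C p \<and> h 0 - h p \<le> sc C p" using less.IH by blast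
      have nc: "\<forall>w\<in>Crit. \<not> (p < w \<and> w < u')"
      proof (intro ballI notI)
        fix w assume "w \<in> Crit" "p < w \<and> w < u'"
        then have "w \<in> S" unfolding S_def by simp
        then have "w \<le> p" unfolding p_def using finS by simp
        then show False using \<open>p < w \<and> w < u'\<close> by (simp add: not_le[symmetric])
      qed
      have L: "h u' - h p \<le> sc C (u' - p) \<and> h p - h u' \<le> sc C (u' - p)"
        using local[OF p0 pu _ nc] less.prems(2) by simp
      have eqs: "sc C (u' - p) + sc C p = sc C u'" by (simp add: sc_add_right[symmetric])
      have "h u' - h 0 = (h u' - h p) + (h p - h 0)" by simp
      also have "\<dots> \<le> sc C (u' - p) + sc C p" using L IH by (intro add_mono) auto
      finally have A: "h u' - h 0 \<le> sc C u'" using eqs by simp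
      have "h 0 - h u' = (h 0 - h p) + (h p - h u')" by simp
      also have "\<dots> \<le> sc C p + sc C (u' - p)" using L IH by (intro add_mono) auto
      finally have B: "h 0 - h u' \<le> sc C u'" using eqs by (simp add: add.commute)
      show ?thesis using A B by simp
    qed
  qed
  show ?thesis using main[OF refl u] unfolding C_def .
qed


lemma elim_set:
  assumes nt: "\<exists>r::'v. r \<noteq> 0" and fin: "finite K"
  shows "\<exists>D'. \<forall>e. dsat e D' \<longleftrightarrow> (\<exists>e'. (\<forall>j. j \<notin> K \<longrightarrow> e' j = e j) \<and> dsat e' D)"
  using fin
proof induction
  case empty
  show ?case
  proof (intro exI allI)
    fix e
    show "dsat e D \<longleftrightarrow> (\<exists>e'. (\<forall>j. j \<notin> {} \<longrightarrow> e' j = e j) \<and> dsat e' D)"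
    proof
      assume "\<exists>e'. (\<forall>j. j \<notin> {} \<longrightarrow> e' j = e j) \<and> dsat e' D"
      then obtain e' where "\<forall>j. e' j = e j" "dsat e' D" by auto
      then have "e' = e" by (simp add: ext)
      then show "dsat e D" using \<open>dsat e' D\<close> by simp
    qed auto
  qed
next
  case (insert k K)
  then obtain D1 where D1: "\<forall>e. dsat e D1 \<longleftrightarrow> (\<exists>e'. (\<forall>j. j \<notin> K \<longrightarrow> e' j = e j) \<and> dsat e' D)" by blast
  show ?case
  proof (intro exI allI)
    fix e
    show "dsat e (elimD k D1) \<longleftrightarrow> (\<exists>e'. (\<forall>j. j \<notin> insert k K \<longrightarrow> e' j = e j) \<and> dsat e' D)"
    proof
      assume "dsat e (elimD k D1)"
      then obtain v where "dsat (e(k:=v)) D1" using elimD_correct[OF nt] by blast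
      then obtain e' where e': "\<forall>j. j \<notin> K \<longrightarrow> e' j = (e(k:=v)) j" "dsat e' D" using D1 by blast
      then have "\<forall>j. j \<notin> insert k K \<longrightarrow> e' j = e j" by auto
      then show "\<exists>e'. (\<forall>j. j \<notin> insert k K \<longrightarrow> e' j = e j) \<and> dsat e' D" using e' by blast
    next
      assume "\<exists>e'. (\<forall>j. j \<notin> insert k K \<longrightarrow> e' j = e j) \<and> dsat e' D"
      then obtain e' where e': "\<forall>j. j \<notin> insert k K \<longrightarrow> e' j = e j" "dsat e' D" by blast
      then have "\<forall>j. j \<notin> K \<longrightarrow> e' j = (e(k := e' k)) j" by auto
      then have "dsat (e(k := e' k)) D1" using D1 e'(2) by blast
      then show "dsat e (elimD k D1)" using elimD_correct[OF nt] by blast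
    qed
  qed
qed

end

lemma cont_vec_nth: "continuous_on s f \<Longrightarrow> continuous_on s (\<lambda>x. f x $ i)"
  unfolding continuous_on_def by (auto intro: tendsto_vec_nth)

theorem mainTheorem9:
  fixes sc :: "'k::{division_ring,linordered_ring_strict} \<Rightarrow> 'v::{linordered_ab_group_add,linorder_topology} \<Rightarrow> 'v"
    and X :: "('v ^ 'n) set"
  assumes "ordered_vector_space sc"
    and "\<exists>r::'v. r \<noteq> 0"
    and "definable_vset sc X"
    and "\<not> bounded_box X"
  shows "\<not> definably_contractible sc X"
proof
  assume dc: "definably_contractible sc X"
  interpret ovs sc by unfold_locales (rule assms(1))
  note nt = assms(2)
  obtain a where aX: "a \<in> X" and dr: "deformation_retracts sc X {a}"
    using dc unfolding definably_contractible_def by blast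
  obtain q H where q0: "0 \<le> q" and dh: "definable_homotopy sc q X H"
    and hcont: "continuous_on ({0..q} \<times> X) H" and img: "(\<lambda>x. H (0, x)) ` X = {a}"
    and Hq: "\<forall>x\<in>X. H (q, x) = x"
    using dr unfolding deformation_retracts_def by blast
  define G where "G = {(\<lambda>k :: unit + 'n + 'n. case k of Inl _ \<Rightarrow> t | Inr (Inl i) \<Rightarrow> x $ i
                                     | Inr (Inr i) \<Rightarrow> H (t, x) $ i) | t x. t \<in> {0..q} \<and> x \<in> X}"
  have "definable sc G" using dh unfolding definable_homotopy_def G_def .
  then obtain \<phi> :: "('k,'v) fm" and \<iota> :: "unit + 'n + 'n \<Rightarrow> nat" where inj: "inj \<iota>"
    and Gd: "G = {z. sat sc (\<lambda>j. if j \<in> range \<iota> then z (inv \<iota> j) else 0) \<phi>}"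
    unfolding definable_def by blast
  define env where "env z = (\<lambda>j. if j \<in> range \<iota> then z (inv \<iota> j) else (0::'v))" for z :: "unit + 'n + 'n \<Rightarrow> 'v"
  have env_in: "env z (\<iota> k) = z k" for z k unfolding env_def using inj by simp
  have env_out: "j \<notin> range \<iota> \<Longrightarrow> env z j = 0" for z j unfolding env_def by simp
  have Genv: "z \<in> G \<longleftrightarrow> sat sc (env z) \<phi>" for z unfolding Gd env_def by simp
  have bound: "\<forall>i. \<exists>C. \<forall>x\<in>X. x $ i - a $ i \<le> sc C q \<and> a $ i - x $ i \<le> sc C q"
  proof
    fix i
    define kT where "kT = \<iota> (Inl ())"
    define kY where "kY = \<iota> (Inr (Inr i))"
    define K where "K = (\<lambda>j. \<iota> (Inr (Inr j))) ` {j. j \<noteq> i}"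
    have finK: "finite K" unfolding K_def by simp
    obtain D1 where D1: "\<forall>e. dsat e D1 \<longleftrightarrow> (\<exists>e'. (\<forall>j. j \<notin> K \<longrightarrow> e' j = e j) \<and> dsat e' (fD \<phi>))"
      using elim_set[OF nt finK] by blast
    have kTY: "kT \<noteq> kY" using inj unfolding kT_def kY_def by (simp add: inj_eq)
    have kTK: "kT \<notin> K" using inj unfolding kT_def K_def by (auto simp: inj_eq)
    have kYK: "kY \<notin> K" using inj unfolding kY_def K_def by (auto simp: inj_eq)
    have KI: "\<iota> k \<in> K \<longleftrightarrow> (\<exists>j. k = Inr (Inr j) \<and> j \<noteq> i)" for k
      unfolding K_def using inj by (auto simp: inj_eq)
    have Kr: "K \<subseteq> range \<iota>" unfolding K_def by auto
    define C where "C = (\<Sum>b\<in>set (concat D1). \<bar>inverse (coef kY (fst b)) * coef kT (fst b)\<bar>)"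
    show "\<exists>C. \<forall>x\<in>X. x $ i - a $ i \<le> sc C q \<and> a $ i - x $ i \<le> sc C q"
    proof (intro exI ballI)
      fix x assume xX: "x \<in> X"
      define e00 where "e00 = env (\<lambda>k. case k of Inl _ \<Rightarrow> 0 | Inr (Inl j) \<Rightarrow> x $ j | Inr (Inr j) \<Rightarrow> 0)"
      define Ety where "Ety t y = e00(kT:=t, kY:=y)" for t y
      have Ety_T: "Ety t y kT = t" for t y unfolding Ety_def using kTY by simp
      have Ety_Y: "Ety t y kY = y" for t y unfolding Ety_def by simp
      have Ety_X: "Ety t y (\<iota> (Inr (Inl j))) = x $ j" for t y j
        unfolding Ety_def e00_def kT_def kY_def using inj by (simp add: inj_eq env_in)
      have Ety_out: "j \<notin> range \<iota> \<Longrightarrow> Ety t y j = 0" for t y j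
        unfolding Ety_def e00_def kT_def kY_def by (auto simp: env_out)
      have graph: "dsat (Ety t y) D1 \<longleftrightarrow> (t \<in> {0..q} \<and> y = H (t,x) $ i)" for t y
      proof
        assume "dsat (Ety t y) D1"
        then obtain e' where e': "\<forall>j. j \<notin> K \<longrightarrow> e' j = Ety t y j" "dsat e' (fD \<phi>)" using D1 by blast
        define z' where "z' = (\<lambda>k. e' (\<iota> k))"
        have "env z' = e'"
        proof
          fix j show "env z' j = e' j"
          proof (cases "j \<in> range \<iota>")
            case True
            then show ?thesis unfolding env_def z'_def by (simp add: f_inv_into_f)
          next
            case False
            then have "j \<notin> K" using Kr by blast
            then show ?thesis using e'(1) False by (simp add: env_out Ety_out)
          qed
        qed
        then have "sat sc (env z') \<phi>" using e'(2) fD_correct[OF nt] by simp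
        then have "z' \<in> G" using Genv by simp
        then obtain t' x' where tx: "z' = (\<lambda>k :: unit + 'n + 'n. case k of Inl _ \<Rightarrow> t' | Inr (Inl i) \<Rightarrow> x' $ i
                                     | Inr (Inr i) \<Rightarrow> H (t', x') $ i)" "t' \<in> {0..q}" "x' \<in> X"
          unfolding G_def by blast
        have "t' = z' (Inl ())" using tx(1) by simp
        also have "\<dots> = t" unfolding z'_def using e'(1) kTK Ety_T unfolding kT_def by simp
        finally have tt: "t' = t" .
        have "x' $ j = x $ j" for j
        proof -
          have "x' $ j = z' (Inr (Inl j))" using tx(1) by simp
          also have "\<dots> = x $ j" unfolding z'_def using e'(1) KI[of "Inr (Inl j)"] Ety_X by simp
          finally show ?thesis .
        qed
        then have xx: "x' = x" by (simp add: vec_eq_iff)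
        have "H (t', x') $ i = z' (Inr (Inr i))" using tx(1) by simp
        also have "\<dots> = y" unfolding z'_def using e'(1) kYK Ety_Y unfolding kY_def by simp
        finally show "t \<in> {0..q} \<and> y = H (t,x) $ i" using tt xx tx(2) by simp
      next
        assume a: "t \<in> {0..q} \<and> y = H (t,x) $ i"
        define z where "z = (\<lambda>k :: unit + 'n + 'n. case k of Inl _ \<Rightarrow> t | Inr (Inl i) \<Rightarrow> x $ i
                                     | Inr (Inr i) \<Rightarrow> H (t, x) $ i)"
        have "z \<in> G" unfolding G_def z_def using a xX by blast
        then have s: "dsat (env z) (fD \<phi>)" using Genv fD_correct[OF nt] by simp
        have "\<forall>j. j \<notin> K \<longrightarrow> env z j = Ety t y j"
        proof (intro allI impI)
          fix j assume jK: "j \<notin> K"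
          show "env z j = Ety t y j"
          proof (cases "j \<in> range \<iota>")
            case False
            then show ?thesis by (simp add: env_out Ety_out)
          next
            case True
            then obtain k where k: "j = \<iota> k" by blast
            show ?thesis
            proof (cases k)
              case (Inl u)
              then have "j = kT" using k unfolding kT_def by simp
              have "env z j = t" using k Inl env_in[of z k] unfolding z_def by simp
              moreover have "Ety t y j = t" using \<open>j = kT\<close> Ety_T by simp
              ultimately show ?thesis by simp
            next
              case (Inr k2)
              show ?thesis
              proof (cases k2)
                case (Inl j')
                then show ?thesis using Inr k by (simp add: env_in z_def Ety_X)
              next
                case (Inr j')
                then have "j' = i" using jK KI[of k] k \<open>k = Inr k2\<close> by auto
                then have "j = kY" using k Inr \<open>k = Inr k2\<close> unfolding kY_def by simp
                have "env z j = H (t, x) $ i" using k Inr \<open>k = Inr k2\<close> \<open>j' = i\<close> env_in[of z k] unfolding z_def by simp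
                moreover have "Ety t y j = y" using \<open>j = kY\<close> Ety_Y by simp
                ultimately show ?thesis using a by simp
              qed
            qed
          qed
        qed
        then show "dsat (Ety t y) D1" using D1 s by blast
      qed
      have "continuous_on {0..q} (\<lambda>t. (t, x))" by (intro continuous_on_Pair continuous_on_id continuous_on_const)
      then have "continuous_on {0..q} (\<lambda>t. H (t, x))"
        by (rule continuous_on_compose2[OF hcont]) (use xX in auto)
      then have hc: "continuous_on {0..q} (\<lambda>t. H (t, x) $ i)" by (rule cont_vec_nth)
      have q: "q \<in> {0..q}" using q0 by simp
      have "H (q,x) $ i - H (0,x) $ i \<le> sc C q \<and> H (0,x) $ i - H (q,x) $ i \<le> sc C q"
        using slope_bound[OF nt kTY hc graph[unfolded Ety_def] q] unfolding C_def by simp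
      moreover have "H (q,x) = x" using Hq xX by simp
      moreover have "H (0,x) = a" using img xX by blast
      ultimately show "x $ i - a $ i \<le> sc C q \<and> a $ i - x $ i \<le> sc C q" by simp
    qed
  qed
  obtain Cf where Cf: "\<And>i. \<forall>x\<in>X. x $ i - a $ i \<le> sc (Cf i) q \<and> a $ i - x $ i \<le> sc (Cf i) q"
    using bound by metis
  obtain r0 :: 'v where "r0 \<noteq> 0" using nt by blast
  then have "r0 < 0 \<or> 0 < r0" by (simp add: linorder_neq_iff)
  then have "0 < - r0 \<or> 0 < r0" by simp
  then obtain r :: 'v where r: "0 < r" by blast
  have "bounded_box X"
    unfolding bounded_box_def
  proof (intro exI ballI allI conjI)
    fix x i assume xX: "x \<in> X"
    have h1: "x $ i - a $ i \<le> sc (Cf i) q" and h2: "a $ i - x $ i \<le> sc (Cf i) q" using Cf xX by auto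
    from h2 have "a $ i - sc (Cf i) q \<le> x $ i" by (simp add: diff_le_eq add.commute)
    moreover have "a $ i - sc (Cf i) q - r < a $ i - sc (Cf i) q" using r by simp
    ultimately have "a $ i - sc (Cf i) q - r < x $ i" by order
    then show "(\<chi> i. a $ i - sc (Cf i) q - r) $ i < x $ i" by simp
    from h1 have "x $ i \<le> a $ i + sc (Cf i) q" by (simp add: diff_le_eq add.commute)
    moreover have "a $ i + sc (Cf i) q < a $ i + sc (Cf i) q + r" using r by simp
    ultimately have "x $ i < a $ i + sc (Cf i) q + r" by order
    then show "x $ i < (\<chi> i. a $ i + sc (Cf i) q + r) $ i" by simp
  qed
  then show False using assms(4) by simp
qed
end
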